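(* Let $p,q$ be language models over a finite non-empty alphabet $\Sigma$ with $\mathrm{KL}(p\|q)<\infty$ and with $q(y)=0$ whenever $p(y)=0$. For $Y\sim p$ let $f(Y)=\log\frac{p(Y)}{q(Y)}$ and $g(Y)=\frac{q(Y)}{p(Y)}$. Then $\mathrm{Cov}(f(Y),g(Y))=0$ if and only if $p=q$.
   Context: Language models are probability distributions over $\Sigma^*$; $\mathrm{KL}(p\|q)=\sum_y p(y)\log\frac{p(y)}{q(y)}$, natural log, $0\log 0=0$. *)

theory Defs
  imports "HOL-Probability.Probability"
begin

text \<open>A language model over a finite non-empty alphabet 'a is a probability
  distribution (pmf) on 'a list (the set of finite strings).\<close>

definition KL_term :: "'b pmf \<Rightarrow> 'b pmf \<Rightarrow> 'b \<Rightarrow> real" where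
  "KL_term p q y = (if pmf p y = 0 then 0 else pmf p y * ln (pmf p y / pmf q y))"

text \<open>KL(p||q) < infinity: every y with p(y) > 0 has q(y) > 0 (otherwise a
  summand is +infinity) and the series converges (absolutely, as infinite sums in
  HOL-Analysis require; for KL this is equivalent to finiteness).\<close>
definition KL_finite :: "'b pmf \<Rightarrow> 'b pmf \<Rightarrow> bool" where
  "KL_finite p q \<longleftrightarrow> (\<forall>y. pmf p y > 0 \<longrightarrow> pmf q y > 0) \<and> KL_term p q summable_on UNIV"

definition cov_pmf :: "'b pmf \<Rightarrow> ('b \<Rightarrow> real) \<Rightarrow> ('b \<Rightarrow> real) \<Rightarrow> real" where
  "cov_pmf p X Y = measure_pmf.expectation p
     (\<lambda>y. (X y - measure_pmf.expectation p X) * (Y y - measure_pmf.expectation p Y))"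

end

theory Submission
  imports Defs
begin

lemma ln_mul_nonneg:
  fixes r :: real assumes "r > 0"
  shows "(r - 1) * ln r \<ge> 0" and "(r - 1) * ln r = 0 \<Longrightarrow> r = 1"
proof -
  have A: "r > 1 \<Longrightarrow> ln r > 0" using assms by simp
  have B: "r < 1 \<Longrightarrow> ln r < 0" using assms by simp
  show "(r - 1) * ln r \<ge> 0"
    by (cases "r > 1"; cases "r < 1") (use A B in \<open>auto intro: mult_nonpos_nonpos mult_nonneg_nonneg\<close>)
  show "(r - 1) * ln r = 0 \<Longrightarrow> r = 1"
    using A B by (cases "r > 1"; cases "r < 1") auto
qed

theorem proposition4:
  fixes p q :: "('a::finite) list pmf"
  assumes "KL_finite p q"
    and "\<And>y. pmf p y = 0 \<Longrightarrow> pmf q y = 0"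
  shows "(integrable (measure_pmf p)
            (\<lambda>y. (ln (pmf p y / pmf q y) - measure_pmf.expectation p (\<lambda>y. ln (pmf p y / pmf q y)))
               * (pmf q y / pmf p y - measure_pmf.expectation p (\<lambda>y. pmf q y / pmf p y)))
          \<and> cov_pmf p (\<lambda>y. ln (pmf p y / pmf q y)) (\<lambda>y. pmf q y / pmf p y) = 0)
         \<longleftrightarrow> p = q"
proof -
  define f where "f = (\<lambda>y. ln (pmf p y / pmf q y))"
  define g where "g = (\<lambda>y. pmf q y / pmf p y)"
  define a where "a = measure_pmf.expectation p f"
  have pos: "pmf p y > 0 \<longleftrightarrow> pmf q y > 0" for y
    using assms unfolding KL_finite_def by (metis pmf_nonneg order_less_le)
  have gnn: "ennreal (pmf p y) * ennreal (g y) = ennreal (pmf q y)" for y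
  proof (cases "pmf p y = 0")
    case True then show ?thesis using assms(2) by simp
  next
    case False then show ?thesis unfolding g_def
      by (simp add: ennreal_mult''[symmetric] pmf_nonneg)
  qed
  have "(\<integral>\<^sup>+ y. ennreal (g y) \<partial>measure_pmf p) = (\<integral>\<^sup>+ y. ennreal (pmf q y) \<partial>count_space UNIV)"
    by (simp add: nn_integral_measure_pmf gnn)
  also have "\<dots> = 1" by (simp add: nn_integral_pmf)
  finally have ng: "(\<integral>\<^sup>+ y. ennreal (g y) \<partial>measure_pmf p) = 1" .
  have gpos: "g y \<ge> 0" for y unfolding g_def by simp
  have gint: "integrable (measure_pmf p) g"
    by (rule integrableI_nonneg) (auto simp: ng gpos)
  have Eg: "measure_pmf.expectation p g = 1"
    by (subst integral_eq_nn_integral) (auto simp: ng gpos)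
  have key: "f y * (g y - 1) \<le> 0 \<and> (f y * (g y - 1) = 0 \<longrightarrow> pmf p y = pmf q y)" for y
  proof (cases "pmf p y = 0")
    case True then show ?thesis using assms(2) by (simp add: f_def)
  next
    case False
    then have pp: "pmf p y > 0" by (simp add: order_less_le pmf_nonneg)
    then have qp: "pmf q y > 0" using pos by blast
    have r: "g y > 0" using pp qp by (simp add: g_def)
    have fe: "f y = - ln (g y)" unfolding f_def g_def using pp qp by (simp add: ln_div)
    have e: "f y * (g y - 1) = - ((g y - 1) * ln (g y))" by (simp add: fe)
    show ?thesis using ln_mul_nonneg[OF r] unfolding e using pp qp
      by (auto simp: g_def)
  qed
  show ?thesis
  proof
    assume H: "integrable (measure_pmf p)
            (\<lambda>y. (ln (pmf p y / pmf q y) - measure_pmf.expectation p (\<lambda>y. ln (pmf p y / pmf q y)))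
               * (pmf q y / pmf p y - measure_pmf.expectation p (\<lambda>y. pmf q y / pmf p y)))
          \<and> cov_pmf p (\<lambda>y. ln (pmf p y / pmf q y)) (\<lambda>y. pmf q y / pmf p y) = 0"
    then have hi: "integrable (measure_pmf p) (\<lambda>y. (f y - a) * (g y - 1))"
      and hz: "measure_pmf.expectation p (\<lambda>y. (f y - a) * (g y - 1)) = 0"
      using Eg unfolding cov_pmf_def f_def[symmetric] g_def[symmetric] a_def[symmetric] by (auto simp: f_def g_def)
    have g1i: "integrable (measure_pmf p) (\<lambda>y. a * (g y - 1))"
      using gint by auto
    have g1z: "measure_pmf.expectation p (\<lambda>y. a * (g y - 1)) = 0"
      using gint Eg by simp
    have eq: "(\<lambda>y. - (f y * (g y - 1))) = (\<lambda>y. - ((f y - a) * (g y - 1) + a * (g y - 1)))"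
      by (auto simp: algebra_simps)
    have ii: "integrable (measure_pmf p) (\<lambda>y. - (f y * (g y - 1)))"
      unfolding eq using hi g1i by auto
    have iz: "measure_pmf.expectation p (\<lambda>y. - (f y * (g y - 1))) = 0"
      unfolding eq using hi g1i hz g1z by simp
    have "AE y in measure_pmf p. - (f y * (g y - 1)) = 0"
      using integral_nonneg_eq_0_iff_AE[OF ii] iz key by auto
    then have "\<forall>y\<in>set_pmf p. f y * (g y - 1) = 0"
      by (simp add: AE_measure_pmf_iff)
    then show "p = q"
      by (intro pmf_eqI) (metis key set_pmf_iff assms(2))
  next
    assume "p = q"
    then have f0: "f = (\<lambda>y. 0)" unfolding f_def by auto
    show "integrable (measure_pmf p)
            (\<lambda>y. (ln (pmf p y / pmf q y) - measure_pmf.expectation p (\<lambda>y. ln (pmf p y / pmf q y)))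
               * (pmf q y / pmf p y - measure_pmf.expectation p (\<lambda>y. pmf q y / pmf p y)))
          \<and> cov_pmf p (\<lambda>y. ln (pmf p y / pmf q y)) (\<lambda>y. pmf q y / pmf p y) = 0"
      using f0 unfolding cov_pmf_def f_def by (simp add: fun_eq_iff)
  qed
qed

end
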